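(* In the setting described in the context, let $(x^k)$, $(\bar x^k)$, $(\alpha_k)$ be the sequences generated by the Conceptual Algorithm (with either Method 1 or Method 2). Then for every $k$ for which these are defined: (i) $\dfrac{x^k-\bar x^k}{\alpha_k}-(A_2x^k-A_2\bar x^k)\in (A_2+B)\bar x^k+A_1x^k$; (ii) $\operatorname{zer}(A+B)\subseteq T_k$.
   Context: Let $\mathcal H$ be a real Hilbert space with inner product $\langle\cdot,\cdot\rangle$ and norm $\|\cdot\|$. Let $A_1:\mathcal H\to\mathcal H$ be $\beta$-cocoercive for some $\beta>0$ (i.e. $\langle A_1x-A_1y,x-y\rangle\ge\beta\|A_1x-A_1y\|^2$ for all $x,y$), let $A_2:\mathcal H\to\mathcal H$ be maximally monotone and uniformly continuous, let $B:\mathcal H\rightrightarrows\mathcal H$ be maximally monotone, and set $A:=A_1+A_2$. Assume $\operatorname{zer}(A+B):=\{x:0\in Ax+Bx\}\neq\emptyset$. $J_{\alpha B}:=(I+\alpha B)^{-1}$ for $\alpha>0$, and $P_C$ denotes the orthogonal projection onto a nonempty closed convex set $C$. Fix $\theta,\delta\in(0,1)$, $\bar\delta>0$ with $1-\delta-\bar\delta>0$, and $\alpha_{-1}>0$ with $\alpha_{-1}\le4\beta\bar\delta$. Conceptual Algorithm: pick $x^0\in\mathcal H$. Given $x^k$ and $\alpha_{k-1}$, for $j\in\mathbb N$ let $\bar x^k_j:=J_{\alpha_{k-1}\theta^jB}(x^k-\alpha_{k-1}\theta^jAx^k)$ and let $j(k)$ be the smallest $j\in\mathbb N$ with $\alpha_{k-1}\theta^j\langle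 A_2x^k-A_2\bar x^k_j,x^k-\bar x^k_j\rangle\le\delta\|x^k-\bar x^k_j\|^2$. Set $\alpha_k:=\alpha_{k-1}\theta^{j(k)}$, $\bar x^k:=J_{\alpha_kB}(x^k-\alpha_kAx^k)$, $r_k:=\frac{\bar\delta}{\alpha_k}\|x^k-\bar x^k\|^2$, $T_k:=\{x\in\mathcal H:\langle \frac{x^k-\bar x^k}{\alpha_k}-(A_2x^k-A_2\bar x^k),x-\bar x^k\rangle\le r_k\}$ and $\Gamma_k:=\{x\in\mathcal H:\langle x^0-x^k,x-x^k\rangle\le0\}$. Method 1 sets $x^{k+1}:=P_{T_k}(x^k)$; Method 2 sets $x^{k+1}:=P_{T_k\cap\Gamma_k}(x^0)$. The algorithm stops if $x^{k+1}=x^k$. *)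

theory Defs
  imports "HOL-Analysis.Analysis"
begin

text \<open>Real Hilbert space: type class real_inner + complete_space.
  Set-valued operators are modelled as functions 'a \<Rightarrow> 'a set.\<close>

definition monotone_op :: "('a::real_inner \<Rightarrow> 'a set) \<Rightarrow> bool" where
  "monotone_op B \<longleftrightarrow> (\<forall>x y u v. u \<in> B x \<longrightarrow> v \<in> B y \<longrightarrow> inner (u - v) (x - y) \<ge> 0)"

definition maximally_monotone :: "('a::real_inner \<Rightarrow> 'a set) \<Rightarrow> bool" where
  "maximally_monotone B \<longleftrightarrow> monotone_op B \<and>
     (\<forall>x u. (\<forall>y v. v \<in> B y \<longrightarrow> inner (u - v) (x - y) \<ge> 0) \<longrightarrow> u \<in> B x)"

definition cocoercive :: "real \<Rightarrow> ('a::real_inner \<Rightarrow> 'a) \<Rightarrow> bool" where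
  "cocoercive \<beta> A \<longleftrightarrow> (\<forall>x y. inner (A x - A y) (x - y) \<ge> \<beta> * (norm (A x - A y))\<^sup>2)"

definition zer_sum :: "('a::real_vector \<Rightarrow> 'a) \<Rightarrow> ('a \<Rightarrow> 'a) \<Rightarrow> ('a \<Rightarrow> 'a set) \<Rightarrow> 'a set" where
  "zer_sum A1 A2 B = {x. 0 \<in> (\<lambda>b. A1 x + A2 x + b) ` B x}"

text \<open>Resolvent J_{\<alpha>B} = (I + \<alpha>B)^{-1}: the (unique, for maximally monotone B) y
  with z \<in> y + \<alpha> B y.\<close>
definition resolvent :: "real \<Rightarrow> ('a::real_vector \<Rightarrow> 'a set) \<Rightarrow> 'a \<Rightarrow> 'a" where
  "resolvent \<alpha> B z = (THE y. z \<in> (\<lambda>b. y + \<alpha> *\<^sub>R b) ` B y)"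

definition proj :: "'a::real_inner set \<Rightarrow> 'a \<Rightarrow> 'a" where
  "proj C a = (THE p. p \<in> C \<and> (\<forall>y\<in>C. dist a p \<le> dist a y))"

definition fb_point :: "('a::real_vector \<Rightarrow> 'a) \<Rightarrow> ('a \<Rightarrow> 'a) \<Rightarrow> ('a \<Rightarrow> 'a set) \<Rightarrow> real \<Rightarrow> 'a \<Rightarrow> 'a" where
  "fb_point A1 A2 B a x = resolvent a B (x - a *\<^sub>R (A1 x + A2 x))"

definition ls_ok :: "('a::real_inner \<Rightarrow> 'a) \<Rightarrow> ('a \<Rightarrow> 'a) \<Rightarrow> ('a \<Rightarrow> 'a set) \<Rightarrow> real \<Rightarrow> real \<Rightarrow> real \<Rightarrow> 'a \<Rightarrow> nat \<Rightarrow> bool" where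
  "ls_ok A1 A2 B \<theta> \<delta> a x j \<longleftrightarrow>
     (let xb = fb_point A1 A2 B (a * \<theta> ^ j) x in
      (a * \<theta> ^ j) * inner (A2 x - A2 xb) (x - xb) \<le> \<delta> * (norm (x - xb))\<^sup>2)"

definition T_set :: "('a::real_inner \<Rightarrow> 'a) \<Rightarrow> ('a \<Rightarrow> 'a) \<Rightarrow> ('a \<Rightarrow> 'a set) \<Rightarrow> real \<Rightarrow> real \<Rightarrow> 'a \<Rightarrow> 'a set" where
  "T_set A1 A2 B \<delta>bar a x =
     (let xb = fb_point A1 A2 B a x;
          r = (\<delta>bar / a) * (norm (x - xb))\<^sup>2
      in {z. inner ((1 / a) *\<^sub>R (x - xb) - (A2 x - A2 xb)) (z - xb) \<le> r})"

definition Gamma_set :: "'a::real_inner \<Rightarrow> 'a \<Rightarrow> 'a set" where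
  "Gamma_set x0 x = {z. inner (x0 - x) (z - x) \<le> 0}"

text \<open>Step size \<alpha>_{k-1}, with \<alpha>_{-1} = am1.\<close>
definition prev_step :: "real \<Rightarrow> (nat \<Rightarrow> real) \<Rightarrow> nat \<Rightarrow> real" where
  "prev_step am1 \<alpha> k = (if k = 0 then am1 else \<alpha> (k - 1))"

text \<open>The Conceptual Algorithm (method meth \<in> {1,2}) has performed iterations 0..K:
  for every k \<le> K the line search at x^k terminates and \<alpha>_k is set accordingly;
  for every k < K, x^{k+1} is computed by the projection step and the algorithm
  did not stop (x^{k+1} \<noteq> x^k).  x^0 = x 0.\<close>
definition conceptual_alg ::
  "('a::real_inner \<Rightarrow> 'a) \<Rightarrow> ('a \<Rightarrow> 'a) \<Rightarrow> ('a \<Rightarrow> 'a set) \<Rightarrow> real \<Rightarrow> real \<Rightarrow> real \<Rightarrow> real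
   \<Rightarrow> nat \<Rightarrow> (nat \<Rightarrow> 'a) \<Rightarrow> (nat \<Rightarrow> real) \<Rightarrow> nat \<Rightarrow> bool" where
  "conceptual_alg A1 A2 B \<theta> \<delta> \<delta>bar am1 meth x \<alpha> K \<longleftrightarrow>
     (\<forall>k\<le>K. (\<exists>j. ls_ok A1 A2 B \<theta> \<delta> (prev_step am1 \<alpha> k) (x k) j) \<and>
             \<alpha> k = prev_step am1 \<alpha> k * \<theta> ^ (LEAST j. ls_ok A1 A2 B \<theta> \<delta> (prev_step am1 \<alpha> k) (x k) j)) \<and>
     (\<forall>k<K. x (Suc k) =
              (if meth = (1::nat) then proj (T_set A1 A2 B \<delta>bar (\<alpha> k) (x k)) (x k)
               else proj (T_set A1 A2 B \<delta>bar (\<alpha> k) (x k) \<inter> Gamma_set (x 0) (x k)) (x 0))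
            \<and> x (Suc k) \<noteq> x k)"

end

theory Submission imports Defs begin

lemma norm_add_sq: "(norm (y + u))\<^sup>2 = (norm y)\<^sup>2 + 2 * inner y u + (norm (u::'a::real_inner))\<^sup>2"
  using dot_norm[of y u] by simp

lemma norm_lin_sq: "(norm (y + t *\<^sub>R a))\<^sup>2 = (norm y)\<^sup>2 + 2 * t * inner y a + t\<^sup>2 * (norm (a::'a::real_inner))\<^sup>2"
  by (simp add: norm_add_sq power_mult_distrib)

lemma norm_mid_sq: "(norm ((1/2) *\<^sub>R (y1 + y2)))\<^sup>2 = ((norm y1)\<^sup>2 + (norm y2)\<^sup>2)/2 - (norm (y1 - (y2::'a::real_inner)))\<^sup>2 / 4"
proof -
  have e1: "(norm ((1/2) *\<^sub>R (y1 + y2)))\<^sup>2 = ((norm y1)\<^sup>2 + 2 * inner y1 y2 + (norm y2)\<^sup>2) / 4"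
    using norm_add_sq[of y1 y2] by (simp add: power_divide)
  have e2: "(norm (y1 - y2))\<^sup>2 = (norm y1)\<^sup>2 - 2 * inner y1 y2 + (norm y2)\<^sup>2"
    using norm_add_sq[of y1 "- y2"] by simp
  show ?thesis unfolding e1 e2 by (simp add: field_simps)
qed

lemma eps_le: assumes "\<And>t. 0 < t \<Longrightarrow> t \<le> 1 \<Longrightarrow> (a::real) \<le> b + t * D" and "D \<ge> 0" shows "a \<le> b"
proof (rule ccontr)
  assume n: "\<not> a \<le> b"
  define t where "t = min 1 ((a - b) / (2 * (D + 1)))"
  have t0: "0 < t" using n assms(2) by (simp add: t_def)
  have "t \<le> 1" by (simp add: t_def)
  with assms(1) t0 have "a \<le> b + t * D" by blast
  moreover have "t * D \<le> (a - b) / (2 * (D + 1)) * D"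
    using assms(2) by (intro mult_right_mono) (auto simp: t_def)
  moreover have "(a - b) / (2 * (D + 1)) * D < a - b"
  proof -
    have "(a - b) / (2 * (D + 1)) * D = (a - b) * (D / (2 * (D + 1)))" by simp
    also have "\<dots> < (a - b) * 1"
      using n assms(2) by (intro mult_strict_left_mono) (auto simp: field_simps)
    finally show ?thesis by simp
  qed
  ultimately show False by linarith
qed

lemma alg_step:
  fixes m t F X a b Ny Nu Dy Du :: real
  assumes "m \<le> (1 - t) * F + t * X + ((Ny + 2 * t * a + t\<^sup>2 * Dy) + (Nu + 2 * t * b + t\<^sup>2 * Du)) / 2"
    and "F = m - (Ny + Nu) / 2"
  shows "t * F \<le> t * (X + a + b + t * ((Dy + Du) / 2))"
proof -
  have "F + (Ny + Nu) / 2 \<le> (1 - t) * F + t * X + ((Ny + 2 * t * a + t\<^sup>2 * Dy) + (Nu + 2 * t * b + t\<^sup>2 * Du)) / 2"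
    using assms by simp
  then have "F * t + (Nu + Ny) / 2
     \<le> X * t + (Nu + (Ny + (Du * (t * t) + (Dy * (t * t) + (a * (t * 2) + b * (t * 2)))))) / 2"
    by (simp add: algebra_simps power2_eq_square)
  then have "F * t \<le> X * t + (a * t + (b * t + (Du * (t * t) + Dy * (t * t)) / 2))"
    by (simp add: field_simps)
  then show ?thesis by (simp add: algebra_simps power2_eq_square)
qed

lemma minty_core:
  fixes B :: "'a::{real_inner,complete_space} \<Rightarrow> 'a set"
  assumes mm: "maximally_monotone B"
  shows "\<exists>y. - y \<in> B y"
proof -
  have mono: "\<And>x y u v. u \<in> B x \<Longrightarrow> v \<in> B y \<Longrightarrow> inner (u - v) (x - y) \<ge> 0"
    using mm unfolding maximally_monotone_def monotone_op_def by blast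
  have maxi: "\<And>x u. (\<And>y v. v \<in> B y \<Longrightarrow> inner (u - v) (x - y) \<ge> 0) \<Longrightarrow> u \<in> B x"
    using mm unfolding maximally_monotone_def by blast
  define G where "G y u c \<longleftrightarrow> (\<forall>v w. w \<in> B v \<longrightarrow>
      inner y w + inner v u - inner v w + ((norm y)\<^sup>2 + (norm u)\<^sup>2) / 2 \<le> c)" for y u c
  have Gmono: "G y u c \<Longrightarrow> c \<le> c' \<Longrightarrow> G y u c'" for y u c c'
    unfolding G_def by force
  obtain v0 w0 where vw0: "w0 \<in> B v0"
  proof -
    have "\<exists>v w. w \<in> B v"
    proof (rule ccontr)
      assume "\<not> ?thesis"
      moreover have "0 \<in> B 0" using calculation by (intro maxi) auto
      ultimately show False by blast
    qed
    then show ?thesis using that by blast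
  qed
  have lower: "inner y u + ((norm y)\<^sup>2 + (norm u)\<^sup>2) / 2 \<le> c" if g: "G y u c" for y u c
  proof (rule ccontr)
    assume n: "\<not> ?thesis"
    have "u \<in> B y"
    proof (rule maxi)
      fix v w assume "w \<in> B v"
      with g have "inner y w + inner v u - inner v w + ((norm y)\<^sup>2 + (norm u)\<^sup>2) / 2 \<le> c"
        by (simp add: G_def)
      moreover have "inner (u - w) (y - v) = inner y u - (inner y w + inner v u - inner v w)"
        by (simp add: inner_diff_left inner_diff_right inner_commute)
      ultimately show "inner (u - w) (y - v) \<ge> 0" using n by linarith
    qed
    then have "inner y u + inner y u - inner y u + ((norm y)\<^sup>2 + (norm u)\<^sup>2) / 2 \<le> c"
      using g unfolding G_def by blast
    with n show False by simp
  qed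
  have nonneg: "0 \<le> c" if "G y u c" for y u c
  proof -
    have "inner y u + ((norm y)\<^sup>2 + (norm u)\<^sup>2) / 2 = (norm (y + u))\<^sup>2 / 2"
      by (simp add: norm_add_sq)
    then show ?thesis using lower[OF that] by (metis le_divide_eq_numeral1(1) mult_zero_left zero_le_power2 order_trans)
  qed
  have graphle: "inner v0 w + inner v w0 - inner v w \<le> inner v0 w0" if "w \<in> B v" "w0 \<in> B v0" for v w v0 w0
  proof -
    have "inner (w0 - w) (v0 - v) \<ge> 0" using mono that by blast
    then show ?thesis by (simp add: inner_diff_left inner_diff_right inner_commute)
  qed
  define S where "S = {c. \<exists>y u. G y u c}"
  have Sne: "S \<noteq> {}"
  proof -
    have "G v0 w0 (inner v0 w0 + ((norm v0)\<^sup>2 + (norm w0)\<^sup>2) / 2)"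
      unfolding G_def using graphle vw0 by force
    then show ?thesis unfolding S_def by blast
  qed
  have Sbdd: "bdd_below S" unfolding S_def bdd_below_def using nonneg by blast
  define m where "m = Inf S"
  have m_le: "m \<le> c" if "G y u c" for y u c
    unfolding m_def using that Sbdd by (intro cInf_lower) (auto simp: S_def)
  have approx: "\<exists>y u. G y u (m + e)" if "e > 0" for e
  proof -
    have "Inf S < m + e" using that m_def by simp
    then obtain c where "c \<in> S" "c < m + e" using cInf_less_iff[OF Sne Sbdd] by blast
    then obtain y u where "G y u c" "c < m + e" unfolding S_def by blast
    then show ?thesis using Gmono[of y u c "m + e"] by auto
  qed
  have mid: "G ((1/2) *\<^sub>R (y1 + y2)) ((1/2) *\<^sub>R (u1 + u2))
       ((c1 + c2) / 2 - ((norm (y1 - y2))\<^sup>2 + (norm (u1 - u2))\<^sup>2) / 8)"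
    if g1: "G y1 u1 c1" and g2: "G y2 u2 c2" for y1 u1 c1 y2 u2 c2
    unfolding G_def
  proof (intro allI impI)
    fix v w assume vw: "w \<in> B v"
    have a1: "inner y1 w + inner v u1 - inner v w + ((norm y1)\<^sup>2 + (norm u1)\<^sup>2) / 2 \<le> c1"
      using g1 vw unfolding G_def by blast
    have a2: "inner y2 w + inner v u2 - inner v w + ((norm y2)\<^sup>2 + (norm u2)\<^sup>2) / 2 \<le> c2"
      using g2 vw unfolding G_def by blast
    have l: "inner ((1/2) *\<^sub>R (y1 + y2)) w + inner v ((1/2) *\<^sub>R (u1 + u2)) - inner v w
        = ((inner y1 w + inner v u1 - inner v w) + (inner y2 w + inner v u2 - inner v w)) / 2"
      by (simp add: inner_add_left inner_add_right algebra_simps)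
    show "inner ((1/2) *\<^sub>R (y1 + y2)) w + inner v ((1/2) *\<^sub>R (u1 + u2)) - inner v w
        + ((norm ((1/2) *\<^sub>R (y1 + y2)))\<^sup>2 + (norm ((1/2) *\<^sub>R (u1 + u2)))\<^sup>2) / 2
        \<le> (c1 + c2) / 2 - ((norm (y1 - y2))\<^sup>2 + (norm (u1 - u2))\<^sup>2) / 8"
      unfolding l norm_mid_sq using a1 a2 by (simp add: field_simps)
  qed
  have close: "(norm (y1 - y2))\<^sup>2 + (norm (u1 - u2))\<^sup>2 \<le> 4 * (c1 + c2 - 2 * m)"
    if g1: "G y1 u1 c1" and g2: "G y2 u2 c2" for y1 u1 c1 y2 u2 c2
    using m_le[OF mid[OF g1 g2]] by (simp add: field_simps)
  have "\<forall>n. \<exists>y u. G y u (m + inverse (real (Suc n)))"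
    using approx by simp
  then obtain Y U where YU: "\<And>n. G (Y n) (U n) (m + inverse (real (Suc n)))"
    by metis
  have closeN: "(norm (Y p - Y q))\<^sup>2 + (norm (U p - U q))\<^sup>2 \<le> 8 * inverse (real (Suc N))"
    if "p \<ge> N" "q \<ge> N" for p q N
  proof -
    have "inverse (real (Suc p)) \<le> inverse (real (Suc N))" "inverse (real (Suc q)) \<le> inverse (real (Suc N))"
      using that by (auto simp: field_simps)
    moreover have "4 * (m + inverse (real (Suc p)) + (m + inverse (real (Suc q))) - 2 * m)
        = 4 * inverse (real (Suc p)) + 4 * inverse (real (Suc q))" by (simp add: algebra_simps)
    ultimately show ?thesis using close[OF YU[of p] YU[of q]] by linarith
  qed
  have cauchy: "Cauchy Y \<and> Cauchy U"
  proof -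
    have "\<exists>M. \<forall>p\<ge>M. \<forall>q\<ge>M. norm (Y p - Y q) < e \<and> norm (U p - U q) < e" if "e > 0" for e
    proof -
      obtain N where N: "real N > 8 / e\<^sup>2" using reals_Archimedean2 by blast
      have i: "8 * inverse (real (Suc N)) < e\<^sup>2"
        using N that by (simp add: field_simps) (smt (verit) zero_less_power)
      show ?thesis
      proof (intro exI allI impI conjI)
        fix p q assume pq: "p \<ge> N" "q \<ge> N"
        have h: "(norm (Y p - Y q))\<^sup>2 < e\<^sup>2" "(norm (U p - U q))\<^sup>2 < e\<^sup>2"
          using closeN[OF pq] i by (smt (verit) zero_le_power2)+
        show "norm (Y p - Y q) < e" "norm (U p - U q) < e"
          using h that by (simp_all add: power_less_imp_less_base)
      qed
    qed
    then show ?thesis unfolding Cauchy_def dist_norm by meson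
  qed
  obtain y0 where y0: "Y \<longlonglongrightarrow> y0" using cauchy Cauchy_convergent_iff convergent_def by blast
  obtain u0 where u0: "U \<longlonglongrightarrow> u0" using cauchy Cauchy_convergent_iff convergent_def by blast
  have G0: "G y0 u0 m"
    unfolding G_def
  proof (intro allI impI)
    fix v w assume vw: "w \<in> B v"
    have "(\<lambda>n. inner (Y n) w + inner v (U n) - inner v w + ((norm (Y n))\<^sup>2 + (norm (U n))\<^sup>2) / 2)
       \<longlonglongrightarrow> inner y0 w + inner v u0 - inner v w + ((norm y0)\<^sup>2 + (norm u0)\<^sup>2) / 2"
      using y0 u0 by (intro tendsto_intros) auto
    moreover have "(\<lambda>n. m + inverse (real (Suc n))) \<longlonglongrightarrow> m + 0"
      by (intro tendsto_intros LIMSEQ_inverse_real_of_nat)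
    moreover have "\<forall>n. inner (Y n) w + inner v (U n) - inner v w + ((norm (Y n))\<^sup>2 + (norm (U n))\<^sup>2) / 2
       \<le> m + inverse (real (Suc n))"
      using YU vw unfolding G_def by blast
    ultimately show "inner y0 w + inner v u0 - inner v w + ((norm y0)\<^sup>2 + (norm u0)\<^sup>2) / 2 \<le> m"
      using LIMSEQ_le by fastforce
  qed
  define F0 where "F0 = m - ((norm y0)\<^sup>2 + (norm u0)\<^sup>2) / 2"
  have F0low: "inner y0 u0 \<le> F0" using lower[OF G0] F0_def by simp
  have key: "F0 \<le> inner v w + inner y0 (v - y0) + inner u0 (w - u0)" if vw: "w \<in> B v" for v w
  proof (rule eps_le)
    show "0 \<le> (norm (v - y0))\<^sup>2 + (norm (w - u0))\<^sup>2" by simp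
    fix t :: real assume t: "0 < t" "t \<le> 1"
    define yt where "yt = y0 + t *\<^sub>R (v - y0)"
    define ut where "ut = u0 + t *\<^sub>R (w - u0)"
    have Gt: "G yt ut ((1 - t) * F0 + t * inner v w + ((norm yt)\<^sup>2 + (norm ut)\<^sup>2) / 2)"
      unfolding G_def
    proof (intro allI impI)
      fix v' w' assume vw': "w' \<in> B v'"
      have a0: "inner y0 w' + inner v' u0 - inner v' w' \<le> F0"
        using G0 vw' unfolding G_def F0_def by force
      have a1: "inner v w' + inner v' w - inner v' w' \<le> inner v w"
        using graphle[OF vw' vw] .
      have e: "inner yt w' + inner v' ut - inner v' w'
         = (1 - t) * (inner y0 w' + inner v' u0 - inner v' w') + t * (inner v w' + inner v' w - inner v' w')"
        unfolding yt_def ut_def by (simp add: inner_add_left inner_add_right inner_diff_left inner_diff_right algebra_simps)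
      have "(1 - t) * (inner y0 w' + inner v' u0 - inner v' w') \<le> (1 - t) * F0"
        using a0 t by (intro mult_left_mono) auto
      moreover have "t * (inner v w' + inner v' w - inner v' w') \<le> t * inner v w"
        using a1 t by (intro mult_left_mono) auto
      ultimately show "inner yt w' + inner v' ut - inner v' w' + ((norm yt)\<^sup>2 + (norm ut)\<^sup>2) / 2
         \<le> (1 - t) * F0 + t * inner v w + ((norm yt)\<^sup>2 + (norm ut)\<^sup>2) / 2"
        unfolding e by linarith
    qed
    have ny: "(norm yt)\<^sup>2 = (norm y0)\<^sup>2 + 2 * t * inner y0 (v - y0) + t\<^sup>2 * (norm (v - y0))\<^sup>2"
      unfolding yt_def by (rule norm_lin_sq)
    have nu: "(norm ut)\<^sup>2 = (norm u0)\<^sup>2 + 2 * t * inner u0 (w - u0) + t\<^sup>2 * (norm (w - u0))\<^sup>2"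
      unfolding ut_def by (rule norm_lin_sq)
    have "m \<le> (1 - t) * F0 + t * inner v w + ((norm yt)\<^sup>2 + (norm ut)\<^sup>2) / 2"
      using m_le[OF Gt] .
    then have "t * F0 \<le> t * (inner v w + inner y0 (v - y0) + inner u0 (w - u0)
        + t * (((norm (v - y0))\<^sup>2 + (norm (w - u0))\<^sup>2) / 2))"
      unfolding ny nu by (rule alg_step) (simp add: F0_def)
    then have "F0 \<le> inner v w + inner y0 (v - y0) + inner u0 (w - u0)
        + t * (((norm (v - y0))\<^sup>2 + (norm (w - u0))\<^sup>2) / 2)"
      using t by simp
    then show "F0 \<le> inner v w + inner y0 (v - y0) + inner u0 (w - u0) + t * ((norm (v - y0))\<^sup>2 + (norm (w - u0))\<^sup>2)"
    proof -
      have "0 \<le> t * ((norm (v - y0))\<^sup>2 + (norm (w - u0))\<^sup>2)" using t by simp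
      then show ?thesis using \<open>F0 \<le> _\<close> by linarith
    qed
  qed
  have sq0: "0 \<le> (norm (y0 + u0))\<^sup>2" by simp
  have pos: "inner (w + y0) (v + u0) \<ge> (norm (y0 + u0))\<^sup>2" if vw: "w \<in> B v" for v w
  proof -
    have "inner (w + y0) (v + u0) = (inner v w + inner y0 (v - y0) + inner u0 (w - u0))
          + (norm y0)\<^sup>2 + (norm u0)\<^sup>2 + inner y0 u0"
      by (simp add: inner_add_left inner_add_right inner_diff_right inner_commute power2_norm_eq_inner)
    then show ?thesis using key[OF vw] F0low norm_add_sq[of y0 u0] by linarith
  qed
  have inB: "- y0 \<in> B (- u0)"
  proof (rule maxi)
    fix v w assume "w \<in> B v"
    then have "inner (w + y0) (v + u0) \<ge> 0" using pos sq0 by (meson order_trans)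
    moreover have "inner (- y0 - w) (- u0 - v) = inner (w + y0) (v + u0)"
      by (simp add: inner_add_left inner_add_right inner_diff_left inner_diff_right)
    ultimately show "inner (- y0 - w) (- u0 - v) \<ge> 0" by simp
  qed
  have "(norm (y0 + u0))\<^sup>2 \<le> 0" using pos[OF inB] by simp
  then have "u0 = - y0" by (simp add: add_eq_0_iff)
  with inB show ?thesis by auto
qed

lemma minty:
  fixes B :: "'a::{real_inner,complete_space} \<Rightarrow> 'a set"
  assumes mm: "maximally_monotone B" and a: "\<alpha> > 0"
  shows "\<exists>y b. b \<in> B y \<and> z = y + \<alpha> *\<^sub>R b"
proof -
  have mono: "\<And>x y u v. u \<in> B x \<Longrightarrow> v \<in> B y \<Longrightarrow> inner (u - v) (x - y) \<ge> 0"
    using mm unfolding maximally_monotone_def monotone_op_def by blast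
  have maxi: "\<And>x u. (\<And>y v. v \<in> B y \<Longrightarrow> inner (u - v) (x - y) \<ge> 0) \<Longrightarrow> u \<in> B x"
    using mm unfolding maximally_monotone_def by blast
  define C where "C y = (\<lambda>b. \<alpha> *\<^sub>R b - z) ` B y" for y
  have "maximally_monotone C"
    unfolding maximally_monotone_def monotone_op_def
  proof (intro conjI allI impI)
    fix x y u v assume "u \<in> C x" "v \<in> C y"
    then obtain b1 b2 where b: "b1 \<in> B x" "b2 \<in> B y" "u = \<alpha> *\<^sub>R b1 - z" "v = \<alpha> *\<^sub>R b2 - z"
      unfolding C_def by blast
    have "u - v = \<alpha> *\<^sub>R (b1 - b2)" using b by (simp add: scaleR_diff_right)
    then show "inner (u - v) (x - y) \<ge> 0" using mono[OF b(1,2)] a by simp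
  next
    fix x c assume h: "\<forall>y v. v \<in> C y \<longrightarrow> 0 \<le> inner (c - v) (x - y)"
    define u where "u = (1 / \<alpha>) *\<^sub>R (c + z)"
    have cu: "c = \<alpha> *\<^sub>R u - z" using a by (simp add: u_def)
    have "u \<in> B x"
    proof (rule maxi)
      fix y v assume "v \<in> B y"
      then have "\<alpha> *\<^sub>R v - z \<in> C y" unfolding C_def by blast
      with h have "0 \<le> inner (c - (\<alpha> *\<^sub>R v - z)) (x - y)" by blast
      moreover have "c - (\<alpha> *\<^sub>R v - z) = \<alpha> *\<^sub>R (u - v)" using cu by (simp add: algebra_simps)
      ultimately have "0 \<le> \<alpha> * inner (u - v) (x - y)" by simp
      then show "0 \<le> inner (u - v) (x - y)" using a by (simp add: zero_le_mult_iff)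
    qed
    then show "c \<in> C x" unfolding C_def using cu by blast
  qed
  then obtain y where "- y \<in> C y" using minty_core by blast
  then obtain b where "b \<in> B y" "- y = \<alpha> *\<^sub>R b - z" unfolding C_def by blast
  then show ?thesis by (intro exI[of _ y] exI[of _ b]) (auto simp: algebra_simps)
qed

lemma resolvent_prop:
  fixes B :: "'a::{real_inner,complete_space} \<Rightarrow> 'a set"
  assumes mm: "maximally_monotone B" and a: "\<alpha> > 0"
  shows "\<exists>b \<in> B (resolvent \<alpha> B z). z = resolvent \<alpha> B z + \<alpha> *\<^sub>R b"
proof -
  have mono: "\<And>x y u v. u \<in> B x \<Longrightarrow> v \<in> B y \<Longrightarrow> inner (u - v) (x - y) \<ge> 0"
    using mm unfolding maximally_monotone_def monotone_op_def by blast
  have ex: "\<exists>!y. z \<in> (\<lambda>b. y + \<alpha> *\<^sub>R b) ` B y"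
  proof -
    obtain y b where yb: "b \<in> B y" "z = y + \<alpha> *\<^sub>R b" using minty[OF mm a] by blast
    show ?thesis
    proof (rule ex1I[of _ y])
      show "z \<in> (\<lambda>b. y + \<alpha> *\<^sub>R b) ` B y" using yb by blast
    next
      fix y' assume "z \<in> (\<lambda>b. y' + \<alpha> *\<^sub>R b) ` B y'"
      then obtain b' where b': "b' \<in> B y'" "z = y' + \<alpha> *\<^sub>R b'" by blast
      have d: "y - y' = \<alpha> *\<^sub>R (b' - b)" using yb b' by (simp add: algebra_simps)
      have "0 \<le> inner (b - b') (y - y')" using mono[OF yb(1) b'(1)] .
      also have "\<dots> = - \<alpha> * (norm (b - b'))\<^sup>2"
        unfolding d by (simp add: power2_norm_eq_inner inner_diff_left inner_diff_right inner_commute algebra_simps)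
      finally have "\<alpha> * (norm (b - b'))\<^sup>2 \<le> 0" by simp
      then have "(norm (b - b'))\<^sup>2 \<le> 0" using a by (simp add: mult_le_0_iff)
      then have "norm (b - b') = 0" by simp
      then have "b = b'" by simp
      then show "y' = y" using yb b' by simp
    qed
  qed
  from theI'[OF ex] show ?thesis unfolding resolvent_def by blast
qed

lemma quad_bound:
  fixes \<beta> a d D E :: real
  assumes "\<beta> > 0" "a > 0" "a \<le> 4 * \<beta> * d"
  shows "- \<beta> * D\<^sup>2 + D * E \<le> d / a * E\<^sup>2"
proof -
  have "4 * \<beta> * (- \<beta> * D\<^sup>2 + D * E) = E\<^sup>2 - (2 * \<beta> * D - E)\<^sup>2"
    by (simp add: power2_eq_square algebra_simps)
  also have "\<dots> \<le> E\<^sup>2" by simp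
  finally have h: "- \<beta> * D\<^sup>2 + D * E \<le> E\<^sup>2 / (4 * \<beta>)"
    using assms(1) by (simp add: field_simps)
  have "1 / (4 * \<beta>) \<le> d / a" using assms by (simp add: field_simps)
  then have "E\<^sup>2 * (1 / (4 * \<beta>)) \<le> E\<^sup>2 * (d / a)" by (intro mult_left_mono) auto
  with h show ?thesis by (simp add: mult.commute)
qed

lemma step_bounds:
  fixes \<theta> am1 :: real
  assumes "0 < \<theta>" "\<theta> < 1" "am1 > 0"
    and st: "\<forall>k\<le>K. \<alpha> k = prev_step am1 \<alpha> k * \<theta> ^ (J k)"
  shows "n \<le> K \<Longrightarrow> 0 < \<alpha> n \<and> \<alpha> n \<le> am1"
proof (induction n)
  have g: "0 < p * \<theta> ^ j \<and> p * \<theta> ^ j \<le> am1" if "0 < p" "p \<le> am1" for p j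
  proof
    show "0 < p * \<theta> ^ j" using that assms by simp
    have "\<theta> ^ j \<le> 1" using assms by (simp add: power_le_one)
    then have "p * \<theta> ^ j \<le> p" using that by (intro mult_left_le) auto
    then show "p * \<theta> ^ j \<le> am1" using that by linarith
  qed
  {
    case 0
    then show ?case using st g[of am1 "J 0"] assms by (simp add: prev_step_def)
  next
    case (Suc n)
    then have "0 < \<alpha> n \<and> \<alpha> n \<le> am1" by simp
    moreover have "\<alpha> (Suc n) = \<alpha> n * \<theta> ^ J (Suc n)" using st Suc.prems by (simp add: prev_step_def)
    ultimately show ?case using g by simp
  }
qed

theorem lemma4p3:
  fixes A1 A2 :: "'a::{real_inner,complete_space} \<Rightarrow> 'a"
    and B :: "'a \<Rightarrow> 'a set"
    and \<beta> \<theta> \<delta> \<delta>bar am1 :: real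
    and meth :: nat
    and x :: "nat \<Rightarrow> 'a" and \<alpha> :: "nat \<Rightarrow> real" and K k :: nat
  assumes "\<beta> > 0" and "cocoercive \<beta> A1"
    and "maximally_monotone (\<lambda>y. {A2 y})" and "uniformly_continuous_on UNIV A2"
    and "maximally_monotone B"
    and "zer_sum A1 A2 B \<noteq> {}"
    and "0 < \<theta>" "\<theta> < 1" "0 < \<delta>" "\<delta> < 1" "\<delta>bar > 0" "1 - \<delta> - \<delta>bar > 0"
    and "am1 > 0" "am1 \<le> 4 * \<beta> * \<delta>bar"
    and "meth = 1 \<or> meth = 2"
    and "conceptual_alg A1 A2 B \<theta> \<delta> \<delta>bar am1 meth x \<alpha> K"
    and "k \<le> K"
  shows "(1 / \<alpha> k) *\<^sub>R (x k - fb_point A1 A2 B (\<alpha> k) (x k))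
            - (A2 (x k) - A2 (fb_point A1 A2 B (\<alpha> k) (x k)))
           \<in> (\<lambda>b. A2 (fb_point A1 A2 B (\<alpha> k) (x k)) + b + A1 (x k)) ` B (fb_point A1 A2 B (\<alpha> k) (x k))
         \<and> zer_sum A1 A2 B \<subseteq> T_set A1 A2 B \<delta>bar (\<alpha> k) (x k)"
proof -
  have st: "\<forall>k\<le>K. \<alpha> k = prev_step am1 \<alpha> k * \<theta> ^ (LEAST j. ls_ok A1 A2 B \<theta> \<delta> (prev_step am1 \<alpha> k) (x k) j)"
    using assms(16) unfolding conceptual_alg_def by blast
  have ab: "0 < \<alpha> k \<and> \<alpha> k \<le> am1"
    by (rule step_bounds[OF assms(7,8,13) st]) (rule assms(17))
  define a where "a = \<alpha> k"
  define xk where "xk = x k"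
  define xb where "xb = fb_point A1 A2 B a xk"
  have a0: "a > 0" and a1: "a \<le> 4 * \<beta> * \<delta>bar" using ab assms(14) by (auto simp: a_def)
  obtain b where b: "b \<in> B xb" "xk - a *\<^sub>R (A1 xk + A2 xk) = xb + a *\<^sub>R b"
    using resolvent_prop[OF assms(5) a0, of "xk - a *\<^sub>R (A1 xk + A2 xk)"]
    unfolding xb_def fb_point_def by blast
  have d: "xk - xb = a *\<^sub>R (A1 xk + A2 xk + b)"
    using b(2) by (simp add: algebra_simps)
  have w: "(1 / a) *\<^sub>R (xk - xb) - (A2 xk - A2 xb) = A2 xb + b + A1 xk"
    unfolding d using a0 by (simp add: algebra_simps)
  have monoB: "\<And>x y u v. u \<in> B x \<Longrightarrow> v \<in> B y \<Longrightarrow> inner (u - v) (x - y) \<ge> 0"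
    using assms(5) unfolding maximally_monotone_def monotone_op_def by blast
  have monoA2: "\<And>x y. inner (A2 x - A2 y) (x - y) \<ge> 0"
    using assms(3) unfolding maximally_monotone_def monotone_op_def by blast
  have part1: "(1 / a) *\<^sub>R (xk - xb) - (A2 xk - A2 xb) \<in> (\<lambda>b. A2 xb + b + A1 xk) ` B xb"
    unfolding w using b(1) by blast
  have part2: "zer_sum A1 A2 B \<subseteq> T_set A1 A2 B \<delta>bar a xk"
  proof
    fix z assume "z \<in> zer_sum A1 A2 B"
    then obtain b' where b': "b' \<in> B z" "A1 z + A2 z + b' = 0" unfolding zer_sum_def by auto
    define D where "D = A1 xk - A1 z"
    have decomp: "A2 xb + b + A1 xk = (A2 xb - A2 z) + (b - b') + D"
      using b' unfolding D_def by (simp add: algebra_simps eq_neg_iff_add_eq_0[symmetric])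
    have i1: "inner (A2 xb - A2 z) (z - xb) \<le> 0"
      using monoA2[of xb z] by (simp add: inner_diff_right)
    have i2: "inner (b - b') (z - xb) \<le> 0"
      using monoB[OF b(1) b'(1)] by (simp add: inner_diff_right)
    have i3: "inner D (z - xk) \<le> - \<beta> * (norm D)\<^sup>2"
      using assms(2) unfolding cocoercive_def D_def
      by (metis (no_types, lifting) inner_minus_right minus_diff_eq neg_le_iff_le mult_minus_left)
    have i4: "inner D (xk - xb) \<le> norm D * norm (xk - xb)"
      by (rule Cauchy_Schwarz_ineq2[THEN order_trans[OF abs_ge_self]])
    have "inner (A2 xb + b + A1 xk) (z - xb)
        = inner (A2 xb - A2 z) (z - xb) + inner (b - b') (z - xb) + (inner D (z - xk) + inner D (xk - xb))"
      unfolding decomp by (simp add: inner_add_left inner_diff_right)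
    also have "\<dots> \<le> - \<beta> * (norm D)\<^sup>2 + norm D * norm (xk - xb)"
      using i1 i2 i3 i4 by linarith
    also have "\<dots> \<le> \<delta>bar / a * (norm (xk - xb))\<^sup>2"
      by (rule quad_bound[OF assms(1) a0 a1])
    finally show "z \<in> T_set A1 A2 B \<delta>bar a xk"
      unfolding T_set_def Let_def xb_def[symmetric] w by simp
  qed
  show ?thesis using part1 part2 unfolding a_def xk_def xb_def by simp
qed

end
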